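(* For every non-negative integer $m$ and for indeterminates $x,y$ (equivalently, for all elements $x,y$ of any commutative ring), \[ (x+y)^{s(m)} \;=\; \sum_{\substack{0\leq k\leq m \\ (k,\,m-k)\ \text{carry-free}}} x^{s(k)}\,y^{s(m-k)} . \]
   Context: For a non-negative integer $k$, $s(k)$ denotes the sum of the digits of the binary representation of $k$ (e.g. $s(3)=2$, $s(0)=0$). A pair $(a,b)$ of non-negative integers is called carry-free if the addition $a+b$ performed in binary involves no carries, i.e. no binary digit position has a $1$ in both $a$ and $b$. *)

theory Defs
  imports Main
begin

fun bsum :: "nat \<Rightarrow> nat" where
  "bsum k = (if k = 0 then 0 else k mod 2 + bsum (k div 2))"

declare bsum.simps [simp del]

definition carry_free :: "nat \<Rightarrow> nat \<Rightarrow> bool" where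
  "carry_free a b \<longleftrightarrow> (\<forall>i. \<not> (bit a i \<and> bit b i))"

end

theory Submission
  imports Defs
begin

lemma bsum_0: "bsum 0 = 0"
  by (subst bsum.simps) simp

lemma bsum_2: "bsum (2*j) = bsum j"
  by (cases "j = 0") (simp add: bsum_0, subst bsum.simps, simp)

lemma bsum_21: "bsum (2*j+1) = Suc (bsum j)"
  by (subst bsum.simps) simp

lemma cf_step: "carry_free a b \<longleftrightarrow> \<not> (odd a \<and> odd b) \<and> carry_free (a div 2) (b div 2)"
proof -
  have e: "(\<forall>i. P i) \<longleftrightarrow> P 0 \<and> (\<forall>i. P (Suc i))" for P :: "nat \<Rightarrow> bool"
    by (metis not0_implies_Suc)
  show ?thesis unfolding carry_free_def
    by (subst e) (simp add: bit_0 bit_Suc)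
qed

lemma cf00[simp]: "carry_free (2*a) (2*b) = carry_free a b"
  by (subst cf_step) simp
lemma cf01[simp]: "carry_free (2*a) (Suc (2*b)) = carry_free a b"
  by (subst cf_step) simp
lemma cf10[simp]: "carry_free (Suc (2*a)) (2*b) = carry_free a b"
  by (subst cf_step) simp
lemma cf11[simp]: "\<not> carry_free (Suc (2*a)) (Suc (2*b))"
  by (subst cf_step) simp

definition A :: "nat \<Rightarrow> nat set" where "A m = {k. k \<le> m \<and> carry_free k (m - k)}"

lemma finA: "finite (A m)" unfolding A_def by (rule finite_subset[of _ "{..m}"]) auto

lemma A_even: "A (2*q) = (\<lambda>j. 2*j) ` A q"
proof (intro set_eqI iffI)
  fix k assume "k \<in> A (2*q)"
  hence k: "k \<le> 2*q" "carry_free k (2*q-k)" by (auto simp: A_def)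
  show "k \<in> (\<lambda>j. 2*j) ` A q"
  proof (cases "even k")
    case True
    then obtain j where j: "k = 2*j" by auto
    have "2*q - k = 2*(q-j)" using j by auto
    with k j show ?thesis by (auto simp: A_def)
  next
    case False
    then obtain j where j: "k = 2*j+1" by (metis oddE)
    with k have "2*q - k = 2*(q-j-1) + 1" by auto
    with k j have False by (simp add:)
    thus ?thesis ..
  qed
next
  fix k assume "k \<in> (\<lambda>j. 2*j) ` A q"
  then obtain j where j: "k = 2*j" "j \<le> q" "carry_free j (q-j)" by (auto simp: A_def)
  have "2*q - k = 2*(q-j)" using j by auto
  with j show "k \<in> A (2*q)" by (auto simp: A_def)
qed

lemma A_odd: "A (2*q+1) = (\<lambda>j. 2*j) ` A q \<union> (\<lambda>j. 2*j+1) ` A q"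
proof (intro set_eqI iffI)
  fix k assume "k \<in> A (2*q+1)"
  hence k: "k \<le> 2*q+1" "carry_free k (2*q+1-k)" by (auto simp: A_def)
  show "k \<in> (\<lambda>j. 2*j) ` A q \<union> (\<lambda>j. 2*j+1) ` A q"
  proof (cases "even k")
    case True
    then obtain j where j: "k = 2*j" by auto
    have "2*q + 1 - k = 2*(q-j) + 1" using j k by auto
    with k j show ?thesis by (auto simp: A_def)
  next
    case False
    then obtain j where j: "k = 2*j+1" by (metis oddE)
    with k have "2*q + 1 - k = 2*(q-j)" by auto
    with k j show ?thesis by (auto simp: A_def)
  qed
next
  fix k assume "k \<in> (\<lambda>j. 2*j) ` A q \<union> (\<lambda>j. 2*j+1) ` A q"
  then obtain j c where j: "k = 2*j+c" "c \<le> 1" "j \<le> q" "carry_free j (q-j)"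
  proof -
    from \<open>k \<in> _\<close> obtain j where "j \<in> A q" "k = 2*j \<or> k = 2*j+1" by blast
    thus thesis using that[of j 0] that[of j 1] by (auto simp: A_def)
  qed
  show "k \<in> A (2*q+1)"
  proof (cases c)
    case 0
    have "2*q + 1 - k = 2*(q-j) + 1" using j 0 by auto
    with j 0 show ?thesis by (auto simp: A_def)
  next
    case (Suc c')
    with j have c: "c = 1" by auto
    have "2*q + 1 - k = 2*(q-j)" using j c by auto
    with j c show ?thesis by (auto simp: A_def)
  qed
qed

lemma main:
  fixes x y :: "'a :: comm_ring_1"
  shows "(x + y) ^ bsum m = (\<Sum>k \<in> A m. x ^ bsum k * y ^ bsum (m - k))"
proof (induction m rule: less_induct)
  case (less m)
  show ?case
  proof (cases "m = 0")
    case True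
    have "A 0 = {0}" by (auto simp: A_def carry_free_def)
    with True show ?thesis by (simp add: bsum_0)
  next
    case False
    obtain q where q: "m = 2*q \<or> m = 2*q+1" by (metis oddE evenE)
    have qm: "q < m" using q False by auto
    have IH: "(x + y) ^ bsum q = (\<Sum>k \<in> A q. x ^ bsum k * y ^ bsum (q - k))"
      using less qm by blast
    have inj1: "inj_on (\<lambda>j. 2*j) (A q)" and inj2: "inj_on (\<lambda>j::nat. 2*j+1) (A q)"
      by (auto simp: inj_on_def)
    have le: "j \<in> A q \<Longrightarrow> j \<le> q" for j by (auto simp: A_def)
    from q show ?thesis
    proof
      assume m: "m = 2*q"
      have "(\<Sum>k \<in> A m. x ^ bsum k * y ^ bsum (m - k))
          = (\<Sum>j \<in> A q. x ^ bsum (2*j) * y ^ bsum (2*q - 2*j))"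
        unfolding m A_even by (simp add: sum.reindex[OF inj1])
      also have "\<dots> = (\<Sum>j \<in> A q. x ^ bsum j * y ^ bsum (q - j))"
        by (rule sum.cong) (auto simp flip: diff_mult_distrib2 simp: bsum_2)
      finally show ?thesis using IH m by (simp add: bsum_2)
    next
      assume m: "m = 2*q+1"
      have disj: "(\<lambda>j. 2*j) ` A q \<inter> (\<lambda>j. 2*j+1) ` A q = {}" by auto presburger
      have "(\<Sum>k \<in> A m. x ^ bsum k * y ^ bsum (m - k))
          = (\<Sum>j \<in> A q. x ^ bsum (2*j) * y ^ bsum (2*q + 1 - 2*j))
            + (\<Sum>j \<in> A q. x ^ bsum (2*j+1) * y ^ bsum (2*q + 1 - (2*j+1)))"
        unfolding m A_odd
        apply (subst sum.union_disjoint[OF _ _ disj])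
          apply (rule finite_imageI, rule finA)+
        apply (subst sum.reindex[OF inj1], subst sum.reindex[OF inj2])
        apply (simp only: o_def)
        done
      also have "\<dots> = (\<Sum>j \<in> A q. y * (x ^ bsum j * y ^ bsum (q - j)))
            + (\<Sum>j \<in> A q. x * (x ^ bsum j * y ^ bsum (q - j)))"
      proof (intro arg_cong2[where f="(+)"] sum.cong refl)
        fix j assume "j \<in> A q"
        hence "j \<le> q" using le by blast
        hence h: "2*q + 1 - 2*j = 2*(q-j) + 1" by auto
        show "x ^ bsum (2*j) * y ^ bsum (2*q + 1 - 2*j) = y * (x ^ bsum j * y ^ bsum (q - j))"
          unfolding h bsum_2 bsum_21 power_Suc by (simp add: mult_ac)
      next
        fix j assume "j \<in> A q"
        hence h: "2*q + 1 - (2*j+1) = 2*(q-j)" by auto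
        show "x ^ bsum (2*j+1) * y ^ bsum (2*q + 1 - (2*j+1)) = x * (x ^ bsum j * y ^ bsum (q - j))"
          unfolding h bsum_2 bsum_21 power_Suc by (simp add: mult_ac)
      qed
      also have "\<dots> = (x + y) * (x + y) ^ bsum q"
        unfolding IH by (simp add: sum_distrib_left[symmetric] distrib_right)
      finally show ?thesis using m bsum_21[of q] by simp
    qed
  qed
qed

theorem theorem2:
  fixes x y :: "'a :: comm_ring_1" and m :: nat
  shows "(x + y) ^ bsum m = (\<Sum>k \<in> {k. k \<le> m \<and> carry_free k (m - k)}. x ^ bsum k * y ^ bsum (m - k))"
  using main[of x y m] by (simp add: A_def)

end
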